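(* Let $\Gamma$ be a maximal consistent set of SBTrust, $\delta$ a propositional formula, and $(\Delta,\varphi,i)\in S_\Gamma$. Then (a) if $(\Delta,\varphi,i)\in\mathit{max}([\delta]_\Gamma)$, then $\Delta$ is $\delta$-likely for $\Gamma$; (b) if $\Delta$ is $\delta$-likely for $\Gamma$, then $(\Delta,\delta,i)\in\mathit{max}([\delta]_\Gamma)$.
   Context: $\mathcal{L}_T$: $\alpha::=\varphi\mid\varphi\rightsquigarrow\varphi\mid B(\alpha)\mid\alpha*\alpha\mid\neg\alpha$, with $\varphi$ ranging over classical propositional formulas (set $\mathcal{L}_{CL}$) and $*\in\{\land,\lor,\to,\leftrightarrow\}$. SBTrust is the Hilbert system ($\varphi,\psi,\chi,\varphi_i,\psi_i$ propositional; $\alpha,\beta\in\mathcal{L}_T$; rule outputs in $\mathcal{L}_T$): classical tautologies and Modus Ponens; $\varphi\rightsquigarrow\varphi$; $(\varphi\rightsquigarrow\bot)\to\neg\varphi$; $((\psi\land\chi)\rightsquigarrow\varphi)\to(\psi\rightsquigarrow(\chi\to\varphi))$; $(\neg(\varphi\leftrightarrow\psi)\rightsquigarrow\bot)\to((\varphi\rightsquigarrow\chi)\leftrightarrow(\psi\rightsquigarrow\chi))$; rule RCK: from $(\varphi_1\land\dots\land\varphi_n)\to\varphi_{n+1}$ infer $\bigwedge_{j\le n}(\psi\rightsquigarrow\varphi_j)\to(\psi\rightsquigarrow\varphi_{n+1})$; rule $\mathbf{S5_F}$: from $(\ell_1\land\dots\land\ell_n)\to\chi$ infer $(\ell_1\land\dots\land\ell_n)\to(\neg\chi\rightsquigarrow\bot)$,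 each $\ell_j$ being $\varphi_j\rightsquigarrow\psi_j$ or its negation, $\chi$ propositional; $B(\alpha\to\beta)\to(B\alpha\to B\beta)$; $B\alpha\to\neg B\neg\alpha$; $B\alpha\to BB\alpha$; necessitation for $B$. A maximal consistent set (MCS) is $\Gamma\subseteq\mathcal{L}_T$ with $\Gamma\nvdash\bot$ and, for each $\alpha$, $\alpha\in\Gamma$ or $\neg\alpha\in\Gamma$. For MCSs, $\Gamma\leftrightsquigarrow\Delta$ iff they contain the same formulas of the form $\chi\rightsquigarrow\psi$; $[\Gamma]_\leftrightsquigarrow$ is the equivalence class. $\rightsquigarrow_\varphi(\Gamma)=\{\psi:\varphi\rightsquigarrow\psi\in\Gamma\}$, and $\Delta$ is $\varphi$-likely for $\Gamma$ if $\rightsquigarrow_\varphi(\Gamma)\subseteq\Delta$. Let $S_\Gamma=[\Gamma]_\leftrightsquigarrow\times\mathcal{L}_{CL}\times\{0,1,2\}$ and $[\delta]_\Gamma=\{(\Delta,\varphi,i)\in S_\Gamma:\delta\in\Delta\}$. Define $\succeq_\Gamma\subseteq S_\Gamma\times S_\Gamma$ by: $(\Delta,\varphi,i)\succeq_\Gamma(\Omega,\psi,j)$ iff ($\Delta$ is $\varphi$-likely for $\Gamma$ and $\varphi\in\Omega$) or ($i=1,j=0$) or ($i=2,j=1$) or ($i=0,j=2$). For $X\subseteq S_\Gamma$, $\mathit{max}(X)=\{x\in X:\forall y\in X\,(y\succeq_\Gamma x\Rightarrow x\succeq_\Gamma y)\}$. *)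

theory Defs
  imports Main
begin

text \<open>One datatype for all formulas; propositional formulas (L_CL) and
  formulas of L_T are carved out by predicates.  Cond phi psi is phi ~> psi,
  Bel alpha is B(alpha).\<close>

datatype 'a fm =
    Atom 'a
  | Bot
  | Not "'a fm"
  | And "'a fm" "'a fm"
  | Or "'a fm" "'a fm"
  | Imp "'a fm" "'a fm"
  | Iff "'a fm" "'a fm"
  | Cond "'a fm" "'a fm"
  | Bel "'a fm"

fun is_prop :: "'a fm \<Rightarrow> bool" where
  "is_prop (Atom a) = True"
| "is_prop Bot = True"
| "is_prop (Not p) = is_prop p"
| "is_prop (And p q) = (is_prop p \<and> is_prop q)"
| "is_prop (Or p q) = (is_prop p \<and> is_prop q)"
| "is_prop (Imp p q) = (is_prop p \<and> is_prop q)"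
| "is_prop (Iff p q) = (is_prop p \<and> is_prop q)"
| "is_prop (Cond p q) = False"
| "is_prop (Bel p) = False"

fun wf :: "'a fm \<Rightarrow> bool" where
  "wf (Atom a) = True"
| "wf Bot = True"
| "wf (Not p) = wf p"
| "wf (And p q) = (wf p \<and> wf q)"
| "wf (Or p q) = (wf p \<and> wf q)"
| "wf (Imp p q) = (wf p \<and> wf q)"
| "wf (Iff p q) = (wf p \<and> wf q)"
| "wf (Cond p q) = (is_prop p \<and> is_prop q)"
| "wf (Bel p) = wf p"

fun eval :: "('a fm \<Rightarrow> bool) \<Rightarrow> 'a fm \<Rightarrow> bool" where
  "eval v (Atom a) = v (Atom a)"
| "eval v Bot = False"
| "eval v (Not p) = (\<not> eval v p)"
| "eval v (And p q) = (eval v p \<and> eval v q)"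
| "eval v (Or p q) = (eval v p \<or> eval v q)"
| "eval v (Imp p q) = (eval v p \<longrightarrow> eval v q)"
| "eval v (Iff p q) = (eval v p \<longleftrightarrow> eval v q)"
| "eval v (Cond p q) = v (Cond p q)"
| "eval v (Bel p) = v (Bel p)"

definition tautology :: "'a fm \<Rightarrow> bool" where
  "tautology \<alpha> \<longleftrightarrow> (\<forall>v. eval v \<alpha>)"

fun conj_list :: "'a fm list \<Rightarrow> 'a fm" where
  "conj_list [] = Not Bot"
| "conj_list [x] = x"
| "conj_list (x # xs) = And x (conj_list xs)"

definition is_lit :: "'a fm \<Rightarrow> bool" where
  "is_lit l \<longleftrightarrow> (\<exists>p q. is_prop p \<and> is_prop q \<and> (l = Cond p q \<or> l = Not (Cond p q)))"

inductive derivable :: "'a fm \<Rightarrow> bool" ("\<turnstile> _" [40] 40) where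
  taut: "wf \<alpha> \<Longrightarrow> tautology \<alpha> \<Longrightarrow> \<turnstile> \<alpha>"
| mp: "\<turnstile> \<alpha> \<Longrightarrow> \<turnstile> Imp \<alpha> \<beta> \<Longrightarrow> \<turnstile> \<beta>"
| refl: "is_prop \<phi> \<Longrightarrow> \<turnstile> Cond \<phi> \<phi>"
| bot: "is_prop \<phi> \<Longrightarrow> \<turnstile> Imp (Cond \<phi> Bot) (Not \<phi>)"
| shift: "is_prop \<phi> \<Longrightarrow> is_prop \<psi> \<Longrightarrow> is_prop \<chi> \<Longrightarrow>
     \<turnstile> Imp (Cond (And \<psi> \<chi>) \<phi>) (Cond \<psi> (Imp \<chi> \<phi>))"
| lle: "is_prop \<phi> \<Longrightarrow> is_prop \<psi> \<Longrightarrow> is_prop \<chi> \<Longrightarrow>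
     \<turnstile> Imp (Cond (Not (Iff \<phi> \<psi>)) Bot) (Iff (Cond \<phi> \<chi>) (Cond \<psi> \<chi>))"
| RCK: "\<phi>s \<noteq> [] \<Longrightarrow> \<forall>p\<in>set \<phi>s. is_prop p \<Longrightarrow> is_prop \<phi>' \<Longrightarrow> is_prop \<psi> \<Longrightarrow>
     \<turnstile> Imp (conj_list \<phi>s) \<phi>' \<Longrightarrow>
     \<turnstile> Imp (conj_list (map (Cond \<psi>) \<phi>s)) (Cond \<psi> \<phi>')"
| S5F: "ls \<noteq> [] \<Longrightarrow> \<forall>l\<in>set ls. is_lit l \<Longrightarrow> is_prop \<chi> \<Longrightarrow>
     \<turnstile> Imp (conj_list ls) \<chi> \<Longrightarrow>
     \<turnstile> Imp (conj_list ls) (Cond (Not \<chi>) Bot)"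
| K: "wf \<alpha> \<Longrightarrow> wf \<beta> \<Longrightarrow> \<turnstile> Imp (Bel (Imp \<alpha> \<beta>)) (Imp (Bel \<alpha>) (Bel \<beta>))"
| D: "wf \<alpha> \<Longrightarrow> \<turnstile> Imp (Bel \<alpha>) (Not (Bel (Not \<alpha>)))"
| Four: "wf \<alpha> \<Longrightarrow> \<turnstile> Imp (Bel \<alpha>) (Bel (Bel \<alpha>))"
| Nec: "\<turnstile> \<alpha> \<Longrightarrow> \<turnstile> Bel \<alpha>"

fun imps :: "'a fm list \<Rightarrow> 'a fm \<Rightarrow> 'a fm" where
  "imps [] \<alpha> = \<alpha>"
| "imps (x # xs) \<alpha> = Imp x (imps xs \<alpha>)"

definition derives :: "'a fm set \<Rightarrow> 'a fm \<Rightarrow> bool" where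
  "derives \<Gamma> \<alpha> \<longleftrightarrow> (\<exists>xs. set xs \<subseteq> \<Gamma> \<and> (\<turnstile> imps xs \<alpha>))"

definition MCS :: "'a fm set \<Rightarrow> bool" where
  "MCS \<Gamma> \<longleftrightarrow> \<Gamma> \<subseteq> {\<alpha>. wf \<alpha>} \<and> \<not> derives \<Gamma> Bot \<and>
     (\<forall>\<alpha>. wf \<alpha> \<longrightarrow> \<alpha> \<in> \<Gamma> \<or> Not \<alpha> \<in> \<Gamma>)"

definition cond_equiv :: "'a fm set \<Rightarrow> 'a fm set \<Rightarrow> bool" where
  "cond_equiv \<Gamma> \<Delta> \<longleftrightarrow> (\<forall>\<chi> \<psi>. Cond \<chi> \<psi> \<in> \<Gamma> \<longleftrightarrow> Cond \<chi> \<psi> \<in> \<Delta>)"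

definition cond_class :: "'a fm set \<Rightarrow> 'a fm set set" where
  "cond_class \<Gamma> = {\<Delta>. MCS \<Delta> \<and> cond_equiv \<Gamma> \<Delta>}"

definition cons_of :: "'a fm \<Rightarrow> 'a fm set \<Rightarrow> 'a fm set" where
  "cons_of \<phi> \<Gamma> = {\<psi>. Cond \<phi> \<psi> \<in> \<Gamma>}"

definition likely :: "'a fm set \<Rightarrow> 'a fm \<Rightarrow> 'a fm set \<Rightarrow> bool" where
  "likely \<Gamma> \<phi> \<Delta> \<longleftrightarrow> cons_of \<phi> \<Gamma> \<subseteq> \<Delta>"

definition S :: "'a fm set \<Rightarrow> ('a fm set \<times> 'a fm \<times> nat) set" where
  "S \<Gamma> = {(\<Delta>, \<phi>, i). \<Delta> \<in> cond_class \<Gamma> \<and> is_prop \<phi> \<and> i \<in> {0, 1, 2}}"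

definition extent :: "'a fm set \<Rightarrow> 'a fm \<Rightarrow> ('a fm set \<times> 'a fm \<times> nat) set" where
  "extent \<Gamma> \<delta> = {(\<Delta>, \<phi>, i) \<in> S \<Gamma>. \<delta> \<in> \<Delta>}"

definition pref :: "'a fm set \<Rightarrow> ('a fm set \<times> 'a fm \<times> nat) \<Rightarrow> ('a fm set \<times> 'a fm \<times> nat) \<Rightarrow> bool" where
  "pref \<Gamma> x y \<longleftrightarrow> (case x of (\<Delta>, \<phi>, i) \<Rightarrow> case y of (\<Omega>, \<psi>, j) \<Rightarrow>
      (likely \<Gamma> \<phi> \<Delta> \<and> \<phi> \<in> \<Omega>) \<or> (i = 1 \<and> j = 0) \<or> (i = 2 \<and> j = 1) \<or> (i = 0 \<and> j = 2))"

definition maxel :: "'a fm set \<Rightarrow> ('a fm set \<times> 'a fm \<times> nat) set \<Rightarrow> ('a fm set \<times> 'a fm \<times> nat) set" where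
  "maxel \<Gamma> X = {x \<in> X. \<forall>y\<in>X. pref \<Gamma> y x \<longrightarrow> pref \<Gamma> x y}"

end

theory Submission
  imports Defs
begin

lemma prop_wf: "is_prop p \<Longrightarrow> wf p"
  by (induction p) auto

lemma wf_conj_list: "(\<forall>x\<in>set xs. wf x) \<Longrightarrow> wf (conj_list xs)"
  by (induction xs rule: conj_list.induct) auto

lemma eval_conj_list: "eval v (conj_list xs) = (\<forall>x\<in>set xs. eval v x)"
  by (induction xs rule: conj_list.induct) auto

lemma wf_imps: "wf (imps xs a) = ((\<forall>x\<in>set xs. wf x) \<and> wf a)"
  by (induction xs) auto

lemma eval_imps: "eval v (imps xs a) = ((\<forall>x\<in>set xs. eval v x) \<longrightarrow> eval v a)"
  by (induction xs) auto

lemma lit_wf: "is_lit l \<Longrightarrow> wf l"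
  unfolding is_lit_def using prop_wf by auto

lemma derivable_wf: "\<turnstile> a \<Longrightarrow> wf a"
proof (induction rule: derivable.induct)
  case (RCK \<phi>s \<phi>' \<psi>)
  then show ?case using prop_wf by (auto intro!: wf_conj_list)
next
  case (S5F ls \<chi>)
  then show ?case using prop_wf lit_wf by (auto intro!: wf_conj_list)
qed (auto simp: prop_wf)

lemma taut_mp: "\<turnstile> a \<Longrightarrow> wf b \<Longrightarrow> (\<And>v. eval v a \<Longrightarrow> eval v b) \<Longrightarrow> \<turnstile> b"
  by (rule derivable.mp[of a]) (auto intro!: derivable.taut simp: tautology_def derivable_wf)

lemma taut_mp2: "\<turnstile> a \<Longrightarrow> \<turnstile> b \<Longrightarrow> wf c \<Longrightarrow> (\<And>v. eval v a \<Longrightarrow> eval v b \<Longrightarrow> eval v c) \<Longrightarrow> \<turnstile> c"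
proof -
  assume a: "\<turnstile> a" and b: "\<turnstile> b" and c: "wf c" and e: "\<And>v. eval v a \<Longrightarrow> eval v b \<Longrightarrow> eval v c"
  have "\<turnstile> Imp b c" using a c derivable_wf[OF b] e by (intro taut_mp[OF a]) auto
  then show ?thesis using b derivable.mp by blast
qed

lemma MCS_closed:
  assumes M: "MCS G" and xs: "set xs \<subseteq> G" and d: "\<turnstile> imps xs g"
  shows "g \<in> G"
proof (rule ccontr)
  assume "g \<notin> G"
  have wg: "wf g" using derivable_wf[OF d] wf_imps by blast
  have n: "Not g \<in> G" using M \<open>g \<notin> G\<close> wg unfolding MCS_def by blast
  have wx: "\<forall>x\<in>set xs. wf x" using M xs unfolding MCS_def by blast
  have "\<turnstile> imps (xs @ [Not g]) Bot"
    by (rule taut_mp[OF d]) (auto simp: wf_imps wx wg eval_imps)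
  then have "derives G Bot" unfolding derives_def using xs n by (intro exI[of _ "xs @ [Not g]"]) auto
  then show False using M unfolding MCS_def by blast
qed

lemma MCS_thm: "MCS G \<Longrightarrow> \<turnstile> a \<Longrightarrow> a \<in> G"
  using MCS_closed[of G "[]" a] by auto

lemma MCS_notboth: "MCS G \<Longrightarrow> a \<in> G \<Longrightarrow> Not a \<in> G \<Longrightarrow> False"
proof -
  assume M: "MCS G" and a: "a \<in> G" and n: "Not a \<in> G"
  have "wf a" using M a unfolding MCS_def by blast
  then have "\<turnstile> imps [a, Not a] Bot" by (intro derivable.taut) (auto simp: tautology_def)
  then have "derives G Bot" unfolding derives_def using a n by (intro exI[of _ "[a, Not a]"]) auto
  then show False using M unfolding MCS_def by blast
qed

lemma lindenbaum:
  assumes wH: "H \<subseteq> {a. wf a}" and cH: "\<not> derives H Bot"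
  shows "\<exists>M. MCS M \<and> H \<subseteq> M"
proof -
  define A where "A = {X. H \<subseteq> X \<and> X \<subseteq> {a. wf a} \<and> \<not> derives X Bot}"
  have "\<exists>M\<in>A. \<forall>X\<in>A. M \<subseteq> X \<longrightarrow> X = M"
  proof (rule subset_Zorn_nonempty)
    show "A \<noteq> {}" using wH cH unfolding A_def by blast
  next
    fix C assume C: "C \<noteq> {}" "subset.chain A C"
    have "C \<subseteq> A" using C(2) unfolding subset.chain_def by blast
    have "\<not> derives (\<Union>C) Bot"
    proof
      assume "derives (\<Union>C) Bot"
      then obtain xs where xs: "set xs \<subseteq> \<Union>C" "\<turnstile> imps xs Bot" unfolding derives_def by blast
      obtain B where "B \<in> C" "set xs \<subseteq> B"
        using finite_subset_Union_chain[OF _ xs(1) C(1) C(2)] by blast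
      then show False using xs(2) \<open>C \<subseteq> A\<close> unfolding A_def derives_def by blast
    qed
    then show "\<Union>C \<in> A" using C(1) \<open>C \<subseteq> A\<close> unfolding A_def by blast
  qed
  then obtain M where MA: "M \<in> A" and mx: "\<forall>X\<in>A. M \<subseteq> X \<longrightarrow> X = M" by blast
  have "MCS M" unfolding MCS_def
  proof (intro conjI allI impI)
    show "M \<subseteq> {a. wf a}" "\<not> derives M Bot" using MA unfolding A_def by auto
  next
    fix a :: "'a fm" assume wa: "wf a"
    show "a \<in> M \<or> Not a \<in> M"
    proof (rule ccontr)
      assume "\<not> (a \<in> M \<or> Not a \<in> M)"
      then have n1: "insert a M \<notin> A" and n2: "insert (Not a) M \<notin> A" using mx by blast+
      have wM: "M \<subseteq> {a. wf a}" "H \<subseteq> M" using MA unfolding A_def by auto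
      have "derives (insert a M) Bot" using n1 wM wa unfolding A_def by auto
      then obtain xs where xs: "set xs \<subseteq> insert a M" "\<turnstile> imps xs Bot" unfolding derives_def by blast
      have "derives (insert (Not a) M) Bot" using n2 wM wa unfolding A_def by auto
      then obtain ys where ys: "set ys \<subseteq> insert (Not a) M" "\<turnstile> imps ys Bot" unfolding derives_def by blast
      let ?zs = "filter (\<lambda>x. x \<noteq> a) xs @ filter (\<lambda>x. x \<noteq> Not a) ys"
      have sz: "set ?zs \<subseteq> M" using xs ys by auto
      have "\<turnstile> imps ?zs Bot"
      proof (rule taut_mp2[OF xs(2) ys(2)])
        have "\<forall>x\<in>set ?zs. wf x" using sz wM(1) by blast
        then show "wf (imps ?zs Bot)" by (simp add: wf_imps)
      next
        fix v assume e1: "eval v (imps xs Bot)" and e2: "eval v (imps ys Bot)"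
        show "eval v (imps ?zs Bot)"
          unfolding eval_imps
        proof
          assume all: "\<forall>x\<in>set ?zs. eval v x"
          show "eval v Bot"
          proof (cases "eval v a")
            case True
            have "\<forall>x\<in>set xs. eval v x"
            proof
              fix x assume "x \<in> set xs"
              then show "eval v x" using True all by (cases "x = a") auto
            qed
            then show ?thesis using e1 unfolding eval_imps by blast
          next
            case False
            have "\<forall>x\<in>set ys. eval v x"
            proof
              fix x assume "x \<in> set ys"
              then show "eval v x" using False all by (cases "x = Not a") auto
            qed
            then show ?thesis using e2 unfolding eval_imps by blast
          qed
        qed
      qed
      then have "derives M Bot" unfolding derives_def using sz by blast
      then show False using MA unfolding A_def by blast
    qed
  qed
  then show ?thesis using MA unfolding A_def by blast
qed

lemma witness:
  assumes G: "MCS \<Gamma>" and pd: "is_prop \<delta>" and pp: "is_prop \<phi>"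
    and n: "Not (Cond (Not (Imp \<delta> \<phi>)) Bot) \<in> \<Gamma>"
  shows "\<exists>\<Omega>. \<Omega> \<in> cond_class \<Gamma> \<and> \<delta> \<in> \<Omega> \<and> Not \<phi> \<in> \<Omega>"
proof -
  define H where "H = {\<delta>, Not \<phi>} \<union> {c \<in> \<Gamma>. is_lit c}"
  have wH: "H \<subseteq> {a. wf a}" unfolding H_def using pd pp prop_wf lit_wf by auto
  have cH: "\<not> derives H Bot"
  proof
    assume "derives H Bot"
    then obtain xs where xs: "set xs \<subseteq> H" "\<turnstile> imps xs Bot" unfolding derives_def by blast
    define ls where "ls = Cond Bot Bot # filter (\<lambda>x. x \<noteq> \<delta> \<and> x \<noteq> Not \<phi>) xs"
    have cbb: "Cond Bot Bot \<in> \<Gamma>" using MCS_thm[OF G derivable.refl] by simp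
    have lsG: "set ls \<subseteq> \<Gamma>" and lslit: "\<forall>l\<in>set ls. is_lit l"
      using xs(1) cbb unfolding ls_def H_def is_lit_def by auto
    have wls: "\<forall>l\<in>set ls. wf l" using lslit lit_wf by blast
    have "\<turnstile> Imp (conj_list ls) (Imp \<delta> \<phi>)"
    proof (rule taut_mp[OF xs(2)])
      show "wf (Imp (conj_list ls) (Imp \<delta> \<phi>))" using wls wf_conj_list pd pp prop_wf by auto
    next
      fix v assume e: "eval v (imps xs Bot)"
      show "eval v (Imp (conj_list ls) (Imp \<delta> \<phi>))"
      proof (simp only: eval.simps eval_conj_list, intro impI)
        assume all: "\<forall>x\<in>set ls. eval v x" and d: "eval v \<delta>"
        show "eval v \<phi>"
        proof (rule ccontr)
          assume np: "\<not> eval v \<phi>"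
          have "\<forall>x\<in>set xs. eval v x"
          proof
            fix x assume x: "x \<in> set xs"
            show "eval v x"
            proof (cases "x = \<delta> \<or> x = Not \<phi>")
              case True then show ?thesis using d np by auto
            next
              case False then show ?thesis using all x unfolding ls_def by auto
            qed
          qed
          then show False using e unfolding eval_imps by simp
        qed
      qed
    qed
    then have "\<turnstile> Imp (conj_list ls) (Cond (Not (Imp \<delta> \<phi>)) Bot)"
      by (intro derivable.S5F) (auto simp: ls_def lslit pd pp)
    then have "\<turnstile> imps ls (Cond (Not (Imp \<delta> \<phi>)) Bot)"
      by (rule taut_mp) (auto simp: wf_imps wls pd pp prop_wf eval_imps eval_conj_list)
    then have "Cond (Not (Imp \<delta> \<phi>)) Bot \<in> \<Gamma>" using MCS_closed[OF G lsG] by blast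
    then show False using MCS_notboth[OF G _ n] by blast
  qed
  obtain M where M: "MCS M" "H \<subseteq> M" using lindenbaum[OF wH cH] by blast
  have "cond_equiv \<Gamma> M" unfolding cond_equiv_def
  proof (intro allI iffI)
    fix a b assume "Cond a b \<in> \<Gamma>"
    moreover have "wf (Cond a b)" using G calculation unfolding MCS_def by blast
    ultimately show "Cond a b \<in> M" using M(2) unfolding H_def is_lit_def by auto
  next
    fix a b assume c: "Cond a b \<in> M"
    have w: "wf (Cond a b)" using M(1) c unfolding MCS_def by blast
    show "Cond a b \<in> \<Gamma>"
    proof (rule ccontr)
      assume "Cond a b \<notin> \<Gamma>"
      then have "Not (Cond a b) \<in> \<Gamma>" using G w unfolding MCS_def by blast
      then have "Not (Cond a b) \<in> M" using M(2) w unfolding H_def is_lit_def by auto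
      then show False using MCS_notboth[OF M(1) c] by blast
    qed
  qed
  then show ?thesis using M unfolding cond_class_def H_def by auto
qed

theorem corollary1:
  fixes \<Gamma> \<Delta> :: "'a fm set" and \<delta> \<phi> :: "'a fm" and i :: nat
  assumes "MCS \<Gamma>" and "is_prop \<delta>" and "(\<Delta>, \<phi>, i) \<in> S \<Gamma>"
  shows "((\<Delta>, \<phi>, i) \<in> maxel \<Gamma> (extent \<Gamma> \<delta>) \<longrightarrow> likely \<Gamma> \<delta> \<Delta>)
       \<and> (likely \<Gamma> \<delta> \<Delta> \<longrightarrow> (\<Delta>, \<delta>, i) \<in> maxel \<Gamma> (extent \<Gamma> \<delta>))"
proof (intro conjI impI)
  note G = assms(1) and pd = assms(2)
  have Dc: "\<Delta> \<in> cond_class \<Gamma>" and pp: "is_prop \<phi>" and i3: "i \<in> {0,1,2}"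
    using assms(3) unfolding S_def by auto
  have MD: "MCS \<Delta>" using Dc unfolding cond_class_def by blast
  {
    assume x: "(\<Delta>, \<phi>, i) \<in> maxel \<Gamma> (extent \<Gamma> \<delta>)"
    have dD: "\<delta> \<in> \<Delta>" using x unfolding maxel_def extent_def by auto
    define j :: nat where "j = (if i = 0 then 1 else if i = 1 then 2 else 0)"
    have key: "likely \<Gamma> \<phi> \<Delta> \<and> \<phi> \<in> \<Omega>" if "\<Omega> \<in> cond_class \<Gamma>" "\<delta> \<in> \<Omega>" for \<Omega>
    proof -
      have y: "(\<Omega>, \<phi>, j) \<in> extent \<Gamma> \<delta>" using that pp unfolding extent_def S_def j_def by auto
      have "pref \<Gamma> (\<Omega>, \<phi>, j) (\<Delta>, \<phi>, i)" using i3 unfolding pref_def j_def by auto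
      then have "pref \<Gamma> (\<Delta>, \<phi>, i) (\<Omega>, \<phi>, j)" using x y unfolding maxel_def by blast
      then show ?thesis using i3 unfolding pref_def j_def by auto
    qed
    have lpD: "likely \<Gamma> \<phi> \<Delta>" using key[OF Dc dD] by blast
    define C where "C = Cond (Not (Imp \<delta> \<phi>)) Bot"
    have CG: "C \<in> \<Gamma>"
    proof (rule ccontr)
      assume "C \<notin> \<Gamma>"
      moreover have "wf C" unfolding C_def using pd pp prop_wf by auto
      ultimately have "Not C \<in> \<Gamma>" using G unfolding MCS_def by blast
      then obtain \<Omega> where o: "\<Omega> \<in> cond_class \<Gamma>" "\<delta> \<in> \<Omega>" "Not \<phi> \<in> \<Omega>"
        using witness[OF G pd pp] unfolding C_def by blast
      have "\<phi> \<in> \<Omega>" using key[OF o(1,2)] by blast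
      moreover have "MCS \<Omega>" using o(1) unfolding cond_class_def by blast
      ultimately show False using MCS_notboth o(3) by blast
    qed
    have pc: "is_prop (Not (Imp \<delta> \<phi>))" using pd pp by simp
    have "\<turnstile> Imp C (Not (Not (Imp \<delta> \<phi>)))" unfolding C_def by (rule derivable.bot[OF pc])
    then have "\<turnstile> Imp (conj_list [C]) (Iff (And \<phi> \<delta>) \<delta>)"
      by (rule taut_mp) (auto simp: C_def pd pp prop_wf)
    then have "\<turnstile> Imp (conj_list [C]) (Cond (Not (Iff (And \<phi> \<delta>) \<delta>)) Bot)"
      by (intro derivable.S5F) (auto simp: C_def is_lit_def pd pp)
    then have L1: "Cond (Not (Iff (And \<phi> \<delta>) \<delta>)) Bot \<in> \<Gamma>"
      using MCS_closed[OF G, of "[C]"] CG by simp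
    show "likely \<Gamma> \<delta> \<Delta>" unfolding likely_def cons_of_def
    proof
      fix \<chi> assume "\<chi> \<in> {\<psi>. Cond \<delta> \<psi> \<in> \<Gamma>}"
      then have dc: "Cond \<delta> \<chi> \<in> \<Gamma>" by simp
      have pc: "is_prop \<chi>" using dc G unfolding MCS_def by auto
      have "Iff (Cond (And \<phi> \<delta>) \<chi>) (Cond \<delta> \<chi>) \<in> \<Gamma>"
        using MCS_closed[OF G, of "[_]"] L1 derivable.lle[of "And \<phi> \<delta>" \<delta> \<chi>] pd pp pc by simp
      moreover have "\<turnstile> imps [Iff (Cond (And \<phi> \<delta>) \<chi>) (Cond \<delta> \<chi>), Cond \<delta> \<chi>] (Cond (And \<phi> \<delta>) \<chi>)"
        by (rule derivable.taut) (auto simp: tautology_def pd pp pc prop_wf)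
      ultimately have "Cond (And \<phi> \<delta>) \<chi> \<in> \<Gamma>" using MCS_closed[OF G] dc
        by (metis empty_set empty_subsetI insert_subset list.simps(15))
      then have "Cond \<phi> (Imp \<delta> \<chi>) \<in> \<Gamma>"
        using MCS_closed[OF G, of "[_]"] derivable.shift[of \<chi> \<phi> \<delta>] pd pp pc by simp
      then have "Imp \<delta> \<chi> \<in> \<Delta>" using lpD unfolding likely_def cons_of_def by auto
      moreover have "\<turnstile> imps [Imp \<delta> \<chi>, \<delta>] \<chi>"
        by (rule derivable.taut) (auto simp: tautology_def pd pp pc prop_wf)
      ultimately show "\<chi> \<in> \<Delta>" using MCS_closed[OF MD] dD
        by (metis empty_set empty_subsetI insert_subset list.simps(15))
    qed
  }
  {
    assume l: "likely \<Gamma> \<delta> \<Delta>"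
    have "Cond \<delta> \<delta> \<in> \<Gamma>" using MCS_thm[OF G derivable.refl[OF pd]] .
    then have dD: "\<delta> \<in> \<Delta>" using l unfolding likely_def cons_of_def by auto
    have xe: "(\<Delta>, \<delta>, i) \<in> extent \<Gamma> \<delta>" using Dc pd i3 dD unfolding extent_def S_def by auto
    show "(\<Delta>, \<delta>, i) \<in> maxel \<Gamma> (extent \<Gamma> \<delta>)" unfolding maxel_def
    proof (intro CollectI conjI ballI impI xe)
      fix y assume "y \<in> extent \<Gamma> \<delta>"
      then obtain \<Omega> \<psi> j where "y = (\<Omega>, \<psi>, j)" "\<delta> \<in> \<Omega>" unfolding extent_def by auto
      then show "pref \<Gamma> (\<Delta>, \<delta>, i) y" using l unfolding pref_def by auto
    qed
  }
qed

end
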